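(* For any $d\ge1$, $T\ge1$ and any unit vectors $|\psi_1\rangle,\dots,|\psi_T\rangle\in\mathbb{C}^d$, $$\sum_{\pi\in S_T}\mathrm{Tr}\!\left(\pi\bigotimes_{t=1}^T|\psi_t\rangle\langle\psi_t|\right)\ \ge\ 1.$$
   Context: $S_T$ is the symmetric group on $T$ letters. For $\pi\in S_T$, the corresponding permutation operator on $(\mathbb{C}^d)^{\otimes T}$ (also denoted $\pi$) is the linear map with $\pi(|v_1\rangle\otimes\cdots\otimes|v_T\rangle)=|v_{\pi^{-1}(1)}\rangle\otimes\cdots\otimes|v_{\pi^{-1}(T)}\rangle$. *)

theory Defs
  imports "HOL-Analysis.Analysis" "HOL-Library.Complex_Order" "HOL-Combinatorics.Permutations"
begin

text \<open>Computational basis of (C^d)^{\<otimes>T}: index tuples j : {0..<T} \<rightarrow> {0..<d}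
  (extensional functions). Operators are matrices indexed by such tuples.
  Tensor factors are numbered 0..T-1 instead of 1..T.\<close>

definition idx :: "nat \<Rightarrow> nat \<Rightarrow> (nat \<Rightarrow> nat) set" where
  "idx d T = PiE {..<T} (\<lambda>_. {..<d})"

definition op_mult :: "nat \<Rightarrow> nat \<Rightarrow> ((nat \<Rightarrow> nat) \<Rightarrow> (nat \<Rightarrow> nat) \<Rightarrow> complex)
    \<Rightarrow> ((nat \<Rightarrow> nat) \<Rightarrow> (nat \<Rightarrow> nat) \<Rightarrow> complex) \<Rightarrow> (nat \<Rightarrow> nat) \<Rightarrow> (nat \<Rightarrow> nat) \<Rightarrow> complex" where
  "op_mult d T A B i j = (\<Sum>k\<in>idx d T. A i k * B k j)"

definition op_trace :: "nat \<Rightarrow> nat \<Rightarrow> ((nat \<Rightarrow> nat) \<Rightarrow> (nat \<Rightarrow> nat) \<Rightarrow> complex) \<Rightarrow> complex" where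
  "op_trace d T A = (\<Sum>i\<in>idx d T. A i i)"

text \<open>Permutation operator: pi maps basis vector |j> = e_{j 0} \<otimes> ... \<otimes> e_{j (T-1)}
  to the basis vector with t-th factor e_{j (inv pi t)}.\<close>
definition perm_op :: "nat \<Rightarrow> (nat \<Rightarrow> nat) \<Rightarrow> (nat \<Rightarrow> nat) \<Rightarrow> (nat \<Rightarrow> nat) \<Rightarrow> complex" where
  "perm_op T \<pi> i j = (if i = restrict (j \<circ> inv \<pi>) {..<T} then 1 else 0)"

definition tensor_proj :: "nat \<Rightarrow> (nat \<Rightarrow> nat \<Rightarrow> complex) \<Rightarrow> (nat \<Rightarrow> nat) \<Rightarrow> (nat \<Rightarrow> nat) \<Rightarrow> complex" where
  "tensor_proj T \<psi> i j = (\<Prod>t<T. \<psi> t (i t) * cnj (\<psi> t (j t)))"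

end

theory Submission
  imports Defs
begin

definition ip :: "nat \<Rightarrow> (nat\<Rightarrow>complex) \<Rightarrow> (nat\<Rightarrow>complex) \<Rightarrow> complex" where
  "ip D x y = (\<Sum>j<D. x j * cnj (y j))"

definition Bf :: "nat \<Rightarrow> nat \<Rightarrow> (nat \<Rightarrow> nat \<Rightarrow> complex) \<Rightarrow> (nat \<Rightarrow> nat \<Rightarrow> complex) \<Rightarrow> complex" where
  "Bf D n F H = (\<Sum>q\<in>{q. q permutes {..<n}}. \<Prod>t<n. ip D (F t) (H (q t)))"

definition Sym :: "nat \<Rightarrow> (nat \<Rightarrow> nat \<Rightarrow> complex) \<Rightarrow> (nat \<Rightarrow> nat) \<Rightarrow> complex" where
  "Sym n H k = (\<Sum>q\<in>{q. q permutes {..<n}}. \<Prod>t<n. H (q t) (k t))"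

lemma Bf_expand:
  "Bf D n F H = (\<Sum>k\<in>idx D n. (\<Prod>t<n. F t (k t)) * cnj (Sym n H k))"
proof -
  have "Bf D n F H = (\<Sum>q\<in>{q. q permutes {..<n}}. \<Sum>k\<in>idx D n. \<Prod>t<n. F t (k t) * cnj (H (q t) (k t)))"
    unfolding Bf_def ip_def idx_def by (intro sum.cong refl prod_sum_PiE) auto
  also have "\<dots> = (\<Sum>k\<in>idx D n. \<Sum>q\<in>{q. q permutes {..<n}}. (\<Prod>t<n. F t (k t)) * cnj (\<Prod>t<n. H (q t) (k t)))"
    by (subst sum.swap) (simp add: prod.distrib cnj_prod)
  also have "\<dots> = (\<Sum>k\<in>idx D n. (\<Prod>t<n. F t (k t)) * cnj (Sym n H k))"
    unfolding Sym_def by (simp add: sum_distrib_left cnj_sum)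
  finally show ?thesis .
qed

lemma Sym_perm:
  assumes s: "s permutes {..<n}"
  shows "Sym n H (k \<circ> s) = Sym n H k"
proof -
  have "Sym n H (k \<circ> s) = (\<Sum>q\<in>{q. q permutes {..<n}}. \<Prod>t<n. H ((q \<circ> s) t) (k (s t)))"
    unfolding Sym_def by (subst sum_permutations_compose_right[OF s]) simp
  also have "\<dots> = Sym n H k"
    unfolding Sym_def
  proof (intro sum.cong refl)
    fix q
    show "(\<Prod>t<n. H ((q \<circ> s) t) (k (s t))) = (\<Prod>t<n. H (q t) (k t))"
      using prod.permute[OF s, of "\<lambda>t. H (q t) (k t)"] by (simp add: comp_def)
  qed
  finally show ?thesis .
qed

lemma idx_comp_perm:
  assumes s: "s permutes {..<n}" and k: "k \<in> idx D n"
  shows "k \<circ> s \<in> idx D n"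
  using k permutes_in_image[OF s] permutes_not_in[OF s] unfolding idx_def
  by (auto simp: PiE_def extensional_def Pi_def)

lemma Sym_sum:
  assumes s: "s permutes {..<n}"
  shows "(\<Sum>k\<in>idx D n. (\<Prod>t<n. F (s t) (k t)) * cnj (Sym n H k))
        = (\<Sum>k\<in>idx D n. (\<Prod>t<n. F t (k t)) * cnj (Sym n H k))"
proof (rule sum.reindex_bij_witness[where j="\<lambda>k. k \<circ> inv s" and i="\<lambda>k. k \<circ> s"])
  have is': "inv s permutes {..<n}" using permutes_inv[OF s] .
  fix k assume k: "k \<in> idx D n"
  show "k \<circ> inv s \<circ> s = k" by (simp add: o_assoc[symmetric] permutes_inv_o[OF s])
  show "k \<circ> s \<circ> inv s = k" by (simp add: o_assoc[symmetric] permutes_inv_o[OF s])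
  show "k \<circ> s \<in> idx D n" using idx_comp_perm[OF s k] .
  show "k \<circ> inv s \<in> idx D n" using idx_comp_perm[OF is' k] .
  have "Sym n H (k \<circ> inv s \<circ> s) = Sym n H (k \<circ> inv s)" using Sym_perm[OF s] .
  hence e: "Sym n H (k \<circ> inv s) = Sym n H k"
    by (simp add: o_assoc[symmetric] permutes_inv_o[OF s])
  have "(\<Prod>t<n. F t (k (inv s t))) = (\<Prod>t<n. F (s t) (k t))"
    using prod.permute[OF s, of "\<lambda>t. F t (k (inv s t))"] permutes_inverses(2)[OF s] by (simp add: comp_def)
  then show "(\<Prod>t<n. F t ((k \<circ> inv s) t)) * cnj (Sym n H (k \<circ> inv s)) = (\<Prod>t<n. F (s t) (k t)) * cnj (Sym n H k)"
    using e by simp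
qed

lemma Bf_sym:
  "of_nat (fact n) * Bf D n F H = (\<Sum>k\<in>idx D n. Sym n F k * cnj (Sym n H k))"
proof -
  have "(\<Sum>k\<in>idx D n. Sym n F k * cnj (Sym n H k))
     = (\<Sum>s\<in>{q. q permutes {..<n}}. \<Sum>k\<in>idx D n. (\<Prod>t<n. F (s t) (k t)) * cnj (Sym n H k))"
    unfolding Sym_def[of n F] by (subst sum.swap) (simp add: sum_distrib_right)
  also have "\<dots> = (\<Sum>s\<in>{q. q permutes {..<n}}. Bf D n F H)"
    by (intro sum.cong refl) (simp add: Sym_sum Bf_expand)
  also have "\<dots> = of_nat (fact n) * Bf D n F H"
    by (simp add: card_permutations)
  finally show ?thesis by simp
qed

lemma cnj_nonneg: "(z::complex) * cnj z \<ge> 0"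
  by (simp add: complex_mult_cnj less_eq_complex_def)

lemma nonneg_scale:
  assumes "0 \<le> of_nat m * (z::complex)" "m > 0"
  shows "0 \<le> z"
  using assms by (auto simp: less_eq_complex_def zero_le_mult_iff)

lemma Bf_pos:
  assumes "finite A"
  shows "(\<Sum>a\<in>A. \<Sum>b\<in>A. x a * cnj (x b) * Bf D n (F a) (F b)) \<ge> 0"
proof -
  have "of_nat (fact n) * (\<Sum>a\<in>A. \<Sum>b\<in>A. x a * cnj (x b) * Bf D n (F a) (F b))
     = (\<Sum>a\<in>A. \<Sum>b\<in>A. x a * cnj (x b) * (of_nat (fact n) * Bf D n (F a) (F b)))"
    by (simp add: sum_distrib_left algebra_simps)
  also have "\<dots> = (\<Sum>k\<in>idx D n. (\<Sum>a\<in>A. x a * Sym n (F a) k) * cnj (\<Sum>b\<in>A. x b * Sym n (F b) k))"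
    unfolding Bf_sym by (simp add: sum_distrib_left sum_distrib_right cnj_sum sum.swap[of _ A "idx D n"] algebra_simps) (rule sum.swap)
  also have "\<dots> \<ge> 0" by (intro sum_nonneg cnj_nonneg)
  finally have h: "0 \<le> of_nat (fact n) * (\<Sum>a\<in>A. \<Sum>b\<in>A. x a * cnj (x b) * Bf D n (F a) (F b))" .
  show ?thesis using nonneg_scale[OF h] by simp
qed


lemma ip_cnj: "ip D y x = cnj (ip D x y)"
  unfolding ip_def by (simp add: cnj_sum mult.commute)

lemma ip_nonneg: "ip D x x \<ge> 0"
  unfolding ip_def by (intro sum_nonneg cnj_nonneg)

lemma term_b:
  assumes q: "q permutes {..<n}" and i: "i < n"
  shows "(\<Prod>t<Suc n. ip d (f t) (f ((Transposition.transpose n (q i) \<circ> q) t)))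
       = ip d (f i) (f n) * cnj (ip d (f (q i)) (f n)) * (\<Prod>t\<in>{..<n}-{i}. ip d (f t) (f (q t)))"
proof -
  have qn: "q n = n" using permutes_not_in[OF q] by simp
  have qlt: "\<And>t. t < n \<Longrightarrow> q t < n" using permutes_in_image[OF q] by simp
  have qinj: "\<And>t. q t = q i \<Longrightarrow> t = i" using permutes_inj[OF q] by (auto dest: injD)
  have "(\<Prod>t<Suc n. ip d (f t) (f ((Transposition.transpose n (q i) \<circ> q) t)))
       = (\<Prod>t<n. ip d (f t) (f ((Transposition.transpose n (q i) \<circ> q) t))) * ip d (f n) (f (q i))"
    by (simp add: qn)
  also have "(\<Prod>t<n. ip d (f t) (f ((Transposition.transpose n (q i) \<circ> q) t)))
     = ip d (f i) (f n) * (\<Prod>t\<in>{..<n}-{i}. ip d (f t) (f ((Transposition.transpose n (q i) \<circ> q) t)))"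
    using i by (subst prod.remove[of _ i]) auto
  also have "(\<Prod>t\<in>{..<n}-{i}. ip d (f t) (f ((Transposition.transpose n (q i) \<circ> q) t)))
      = (\<Prod>t\<in>{..<n}-{i}. ip d (f t) (f (q t)))"
  proof (rule prod.cong[OF refl])
    fix t assume t: "t \<in> {..<n}-{i}"
    then have "q t \<noteq> q i" "q t \<noteq> n" using qinj qlt by (auto dest: less_not_refl3)
    then show "ip d (f t) (f ((Transposition.transpose n (q i) \<circ> q) t)) = ip d (f t) (f (q t))"
      by (simp add: Transposition.transpose_def)
  qed
  finally show ?thesis by (simp add: ip_cnj[of d "f n"] mult_ac)
qed

lemma per_Suc:
  "Bf d (Suc n) f f = ip d (f n) (f n) * Bf d n f f +
     (\<Sum>q\<in>{q. q permutes {..<n}}. \<Sum>i<n. ip d (f i) (f n) * cnj (ip d (f (q i)) (f n))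
          * (\<Prod>t\<in>{..<n}-{i}. ip d (f t) (f (q t))))"
proof -
  have e: "{..<Suc n} = insert n {..<n}" by auto
  have "Bf d (Suc n) f f = (\<Sum>b\<in>insert n {..<n}. \<Sum>q\<in>{q. q permutes {..<n}}.
           \<Prod>t<Suc n. ip d (f t) (f ((Transposition.transpose n b \<circ> q) t)))"
    unfolding Bf_def by (subst e, subst sum_over_permutations_insert) (auto simp: e)
  also have "\<dots> = (\<Sum>q\<in>{q. q permutes {..<n}}. \<Prod>t<Suc n. ip d (f t) (f (q t)))
      + (\<Sum>b<n. \<Sum>q\<in>{q. q permutes {..<n}}. \<Prod>t<Suc n. ip d (f t) (f ((Transposition.transpose n b \<circ> q) t)))"
    by (subst sum.insert) auto
  also have "(\<Sum>q\<in>{q. q permutes {..<n}}. \<Prod>t<Suc n. ip d (f t) (f (q t)))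
       = ip d (f n) (f n) * Bf d n f f"
    unfolding Bf_def sum_distrib_left
    by (intro sum.cong refl) (auto simp: permutes_not_in mult.commute)
  also have "(\<Sum>b<n. \<Sum>q\<in>{q. q permutes {..<n}}. \<Prod>t<Suc n. ip d (f t) (f ((Transposition.transpose n b \<circ> q) t)))
     = (\<Sum>q\<in>{q. q permutes {..<n}}. \<Sum>b<n. \<Prod>t<Suc n. ip d (f t) (f ((Transposition.transpose n b \<circ> q) t)))"
    by (rule sum.swap)
  also have "\<dots> = (\<Sum>q\<in>{q. q permutes {..<n}}. \<Sum>i<n. ip d (f i) (f n) * cnj (ip d (f (q i)) (f n))
          * (\<Prod>t\<in>{..<n}-{i}. ip d (f t) (f (q t))))"
  proof (rule sum.cong[OF refl])
    fix q assume "q \<in> {q. q permutes {..<n}}"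
    then have q: "q permutes {..<n}" by simp
    have "(\<Sum>b<n. \<Prod>t<Suc n. ip d (f t) (f ((Transposition.transpose n b \<circ> q) t)))
        = (\<Sum>i<n. \<Prod>t<Suc n. ip d (f t) (f ((Transposition.transpose n (q i) \<circ> q) t)))"
      using sum.reindex_bij_betw[OF permutes_imp_bij[OF q], of "\<lambda>b. \<Prod>t<Suc n. ip d (f t) (f ((Transposition.transpose n b \<circ> q) t))"]
      by simp
    also have "\<dots> = (\<Sum>i<n. ip d (f i) (f n) * cnj (ip d (f (q i)) (f n))
          * (\<Prod>t\<in>{..<n}-{i}. ip d (f t) (f (q t))))"
      by (intro sum.cong refl term_b[OF q]) simp
    finally show "(\<Sum>b<n. \<Prod>t<Suc n. ip d (f t) (f ((Transposition.transpose n b \<circ> q) t))) = \<dots>" .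
  qed
  finally show ?thesis .
qed

definition Fe :: "nat \<Rightarrow> (nat \<Rightarrow> nat \<Rightarrow> complex) \<Rightarrow> nat \<Rightarrow> nat \<Rightarrow> nat \<Rightarrow> complex" where
  "Fe d f i t = (if t = i then (\<lambda>j. if j = d then 1 else 0) else (\<lambda>j. if j < d then f t j else 0))"

lemma ip_ext: "ip (Suc d) (\<lambda>j. if j < d then x j else 0) (\<lambda>j. if j < d then y j else 0) = ip d x y"
  unfolding ip_def by simp
lemma ip_ee: "ip (Suc d) (\<lambda>j. if j = d then 1 else 0) (\<lambda>j. if j = d then 1 else 0) = 1"
  unfolding ip_def by simp
lemma ip_e1: "ip (Suc d) (\<lambda>j. if j = d then 1 else 0) (\<lambda>j. if j < d then y j else 0) = 0"
  unfolding ip_def by simp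
lemma ip_e2: "ip (Suc d) (\<lambda>j. if j < d then y j else 0) (\<lambda>j. if j = d then 1 else 0) = 0"
  unfolding ip_def by simp

lemma prodF:
  assumes q: "q permutes {..<n}" and i: "i < n" and i': "i' < n"
  shows "(\<Prod>t<n. ip (Suc d) (Fe d f i t) (Fe d f i' (q t)))
     = (if q i = i' then \<Prod>t\<in>{..<n}-{i}. ip d (f t) (f (q t)) else 0)"
proof -
  have qinj: "\<And>t. q t = q i \<Longrightarrow> t = i" using permutes_inj[OF q] by (auto dest: injD)
  have "(\<Prod>t<n. ip (Suc d) (Fe d f i t) (Fe d f i' (q t)))
     = ip (Suc d) (Fe d f i i) (Fe d f i' (q i)) * (\<Prod>t\<in>{..<n}-{i}. ip (Suc d) (Fe d f i t) (Fe d f i' (q t)))"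
    using i by (subst prod.remove[of _ i]) auto
  moreover have "q i = i' \<Longrightarrow> (\<Prod>t\<in>{..<n}-{i}. ip (Suc d) (Fe d f i t) (Fe d f i' (q t)))
       = (\<Prod>t\<in>{..<n}-{i}. ip d (f t) (f (q t)))"
    by (intro prod.cong refl) (auto simp: Fe_def ip_ext dest: qinj)
  ultimately show ?thesis
    by (auto simp: Fe_def ip_ee ip_e1)
qed

lemma R_eq:
  "(\<Sum>q\<in>{q. q permutes {..<n}}. \<Sum>i<n. ip d (f i) (f n) * cnj (ip d (f (q i)) (f n))
          * (\<Prod>t\<in>{..<n}-{i}. ip d (f t) (f (q t))))
   = (\<Sum>i<n. \<Sum>i'<n. ip d (f i) (f n) * cnj (ip d (f i') (f n)) * Bf (Suc d) n (Fe d f i) (Fe d f i'))"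
proof -
  have "(\<Sum>i<n. \<Sum>i'<n. ip d (f i) (f n) * cnj (ip d (f i') (f n)) * Bf (Suc d) n (Fe d f i) (Fe d f i'))
     = (\<Sum>i<n. \<Sum>i'<n. \<Sum>q\<in>{q. q permutes {..<n}}. ip d (f i) (f n) * cnj (ip d (f i') (f n)) *
          (if q i = i' then \<Prod>t\<in>{..<n}-{i}. ip d (f t) (f (q t)) else 0))"
    unfolding Bf_def sum_distrib_left
    by (intro sum.cong refl) (simp add: prodF)
  also have "\<dots> = (\<Sum>q\<in>{q. q permutes {..<n}}. \<Sum>i<n. \<Sum>i'<n. ip d (f i) (f n) * cnj (ip d (f i') (f n)) *
          (if q i = i' then \<Prod>t\<in>{..<n}-{i}. ip d (f t) (f (q t)) else 0))"
    by (subst sum.swap[of _ "{..<n}" "{q. q permutes {..<n}}"], rule sum.cong[OF refl], rule sum.swap)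
  also have "\<dots> = (\<Sum>q\<in>{q. q permutes {..<n}}. \<Sum>i<n. ip d (f i) (f n) * cnj (ip d (f (q i)) (f n))
          * (\<Prod>t\<in>{..<n}-{i}. ip d (f t) (f (q t))))"
  proof (intro sum.cong refl)
    fix q i assume q: "q \<in> {q. q permutes {..<n}}" and i: "i \<in> {..<n}"
    have "q i < n" using permutes_in_image[of q "{..<n}" i] q i by auto
    then show "(\<Sum>i'<n. ip d (f i) (f n) * cnj (ip d (f i') (f n)) *
          (if q i = i' then \<Prod>t\<in>{..<n}-{i}. ip d (f t) (f (q t)) else 0))
       = ip d (f i) (f n) * cnj (ip d (f (q i)) (f n)) * (\<Prod>t\<in>{..<n}-{i}. ip d (f t) (f (q t)))"
      by (simp add: if_distrib[of "\<lambda>x. _ * x"] sum.delta cong: if_cong)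
  qed
  finally show ?thesis by simp
qed

lemma per_ge: "Bf d n f f \<ge> (\<Prod>t<n. ip d (f t) (f t))"
proof (induction n)
  case 0
  then show ?case by (simp add: Bf_def)
next
  case (Suc n)
  have R: "0 \<le> (\<Sum>i<n. \<Sum>i'<n. ip d (f i) (f n) * cnj (ip d (f i') (f n)) * Bf (Suc d) n (Fe d f i) (Fe d f i'))"
    by (rule Bf_pos) simp
  have "(\<Prod>t<Suc n. ip d (f t) (f t)) = ip d (f n) (f n) * (\<Prod>t<n. ip d (f t) (f t))"
    by simp
  also have "\<dots> \<le> ip d (f n) (f n) * Bf d n f f"
    by (rule mult_left_mono[OF Suc.IH ip_nonneg])
  also have "\<dots> \<le> Bf d (Suc n) f f"
    unfolding per_Suc R_eq using R by simp
  finally show ?case .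
qed


lemma finite_idx[simp]: "finite (idx d T)"
  unfolding idx_def by (rule finite_PiE) auto

lemma restrict_idx:
  assumes p: "\<pi> permutes {..<T}" and k: "k \<in> idx d T"
  shows "restrict (k \<circ> inv \<pi>) {..<T} \<in> idx d T"
  using k permutes_in_image[OF permutes_inv[OF p]] unfolding idx_def
  by (auto simp: PiE_def Pi_def)

lemma trace_eq:
  assumes p: "\<pi> permutes {..<T}"
  shows "op_trace d T (op_mult d T (perm_op T \<pi>) (tensor_proj T \<psi>))
       = (\<Prod>t<T. ip d (\<psi> t) (\<psi> (\<pi> t)))"
proof -
  have "op_trace d T (op_mult d T (perm_op T \<pi>) (tensor_proj T \<psi>))
      = (\<Sum>k\<in>idx d T. \<Sum>i\<in>idx d T. perm_op T \<pi> i k * tensor_proj T \<psi> k i)"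
    unfolding op_trace_def op_mult_def by (rule sum.swap)
  also have "\<dots> = (\<Sum>k\<in>idx d T. tensor_proj T \<psi> k (restrict (k \<circ> inv \<pi>) {..<T}))"
  proof (rule sum.cong[OF refl])
    fix k assume k: "k \<in> idx d T"
    show "(\<Sum>i\<in>idx d T. perm_op T \<pi> i k * tensor_proj T \<psi> k i) = tensor_proj T \<psi> k (restrict (k \<circ> inv \<pi>) {..<T})"
      unfolding perm_op_def using restrict_idx[OF p k]
      by (simp add: if_distrib[of "\<lambda>x. x * _"] sum.delta sum.delta' cong: if_cong)
  qed
  also have "\<dots> = (\<Sum>k\<in>idx d T. \<Prod>t<T. \<psi> t (k t) * cnj (\<psi> (\<pi> t) (k t)))"
  proof (rule sum.cong[OF refl])
    fix k
    have "(\<Prod>t<T. cnj (\<psi> t (k (inv \<pi> t)))) = (\<Prod>t<T. cnj (\<psi> (\<pi> t) (k t)))"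
      using prod.permute[OF p, of "\<lambda>t. cnj (\<psi> t (k (inv \<pi> t)))"] permutes_inverses(2)[OF p]
      by (simp add: comp_def)
    then show "tensor_proj T \<psi> k (restrict (k \<circ> inv \<pi>) {..<T}) = (\<Prod>t<T. \<psi> t (k t) * cnj (\<psi> (\<pi> t) (k t)))"
      unfolding tensor_proj_def by (simp add: prod.distrib)
  qed
  also have "\<dots> = (\<Prod>t<T. ip d (\<psi> t) (\<psi> (\<pi> t)))"
    unfolding ip_def idx_def by (rule prod_sum_PiE[symmetric]) auto
  finally show ?thesis .
qed

theorem mainTheorem8:
  fixes d T :: nat and \<psi> :: "nat \<Rightarrow> nat \<Rightarrow> complex"
  assumes "d \<ge> 1" and "T \<ge> 1"
    and "\<And>t. t < T \<Longrightarrow> (\<Sum>k<d. (cmod (\<psi> t k))\<^sup>2) = 1"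
  shows "(\<Sum>\<pi>\<in>{\<pi>. \<pi> permutes {..<T}}.
           op_trace d T (op_mult d T (perm_op T \<pi>) (tensor_proj T \<psi>))) \<ge> 1"
proof -
  have "(\<Sum>\<pi>\<in>{\<pi>. \<pi> permutes {..<T}}.
           op_trace d T (op_mult d T (perm_op T \<pi>) (tensor_proj T \<psi>))) = Bf d T \<psi> \<psi>"
    unfolding Bf_def by (rule sum.cong[OF refl]) (simp add: trace_eq)
  moreover have "(\<Prod>t<T. ip d (\<psi> t) (\<psi> t)) = 1"
  proof (rule prod.neutral, rule ballI)
    fix t assume "t \<in> {..<T}"
    then have "(\<Sum>k<d. (cmod (\<psi> t k))\<^sup>2) = 1" using assms(3) by simp
    then have h: "complex_of_real (\<Sum>k<d. (cmod (\<psi> t k))\<^sup>2) = 1" by simp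
    have "ip d (\<psi> t) (\<psi> t) = (\<Sum>j<d. complex_of_real ((cmod (\<psi> t j))\<^sup>2))"
      unfolding ip_def by (simp only: complex_norm_square)
    also have "\<dots> = complex_of_real (\<Sum>k<d. (cmod (\<psi> t k))\<^sup>2)"
      by (simp only: of_real_sum)
    finally show "ip d (\<psi> t) (\<psi> t) = 1" using h by simp
  qed
  ultimately show ?thesis using per_ge[where d=d and n=T and f=\<psi>] by simp
qed

end
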